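(* Let $G$ be a baseline cdf with density $g$, let $\theta>0$, $\lambda\in\mathbb{R}\setminus\{0\}$, and let $0<\alpha_1<\alpha_2$. If $X\sim\mathrm{GMOP\text{-}G}(\theta,\alpha_1,\lambda)$ and $Y\sim\mathrm{GMOP\text{-}G}(\theta,\alpha_2,\lambda)$ (same baseline $G$), then $X\le_{lr}Y$.
   Context: With $\bar\alpha=1-\alpha$, the $\mathrm{GMOP\text{-}G}(\theta,\alpha,\lambda)$ distribution (parameters $\theta>0$, $\alpha>0$, $\lambda\in\mathbb{R}\setminus\{0\}$, baseline cdf $G$ with density $g$) has pdf $$f(t)=\frac{\theta\lambda\alpha^{\theta}(1-e^{-\lambda})g(t)e^{-\lambda G(t)}\left(e^{-\lambda G(t)}-e^{-\lambda}\right)^{\theta-1}}{\left(1-\alpha e^{-\lambda}-\bar\alpha e^{-\lambda G(t)}\right)^{\theta+1}}.$$ For random variables $X$, $Y$ with densities $f_X$, $f_Y$, $X$ is smaller than $Y$ in the likelihood ratio order, $X\le_{lr}Y$, if $f_X(t)/f_Y(t)$ is decreasing in $t$ (on the set where the densities are positive). *)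

theory Defs
  imports "HOL-Analysis.Analysis"
begin

text \<open>The two real powers are taken of absolute values: for lambda > 0 the
  bases are nonnegative (so this is literally the paper's formula); for lambda < 0 both bases
  are nonpositive and the absolute values give the only real-valued reading of the formula.\<close>
definition gmop_pdf ::
  "(real \<Rightarrow> real) \<Rightarrow> (real \<Rightarrow> real) \<Rightarrow> real \<Rightarrow> real \<Rightarrow> real \<Rightarrow> real \<Rightarrow> real" where
  "gmop_pdf G g \<theta> \<alpha> lam t =
     \<theta> * lam * \<alpha> powr \<theta> * (1 - exp (- lam)) * g t * exp (- lam * G t)
       * \<bar>exp (- lam * G t) - exp (- lam)\<bar> powr (\<theta> - 1)
     / \<bar>1 - \<alpha> * exp (- lam) - (1 - \<alpha>) * exp (- lam * G t)\<bar> powr (\<theta> + 1)"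

definition lr_le :: "(real \<Rightarrow> real) \<Rightarrow> (real \<Rightarrow> real) \<Rightarrow> bool" where
  "lr_le fX fY \<longleftrightarrow>
     (\<forall>s t. s \<le> t \<and> fX s > 0 \<and> fY s > 0 \<and> fX t > 0 \<and> fY t > 0
        \<longrightarrow> fX t / fY t \<le> fX s / fY s)"

end

theory Submission
  imports Defs
begin

lemma alg_key:
  fixes Ax Ay Bx By a1 a2 :: real
  assumes "0 \<le> Ax" "Ax \<le> Ay" "0 \<le> By" "By \<le> Bx" "0 < a1" "a1 < a2"
  shows "(Ay + a2 * By) * (Ax + a1 * Bx) \<le> (Ax + a2 * Bx) * (Ay + a1 * By)"
proof -
  have "Ax * By \<le> Ay * Bx" using assms by (intro mult_mono) auto
  hence "0 \<le> (a2 - a1) * (Ay * Bx - Ax * By)" using assms by simp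
  moreover have "(Ax + a2 * Bx) * (Ay + a1 * By) - (Ay + a2 * By) * (Ax + a1 * Bx)
      = (a2 - a1) * (Ay * Bx - Ax * By)" by (simp add: algebra_simps)
  ultimately show ?thesis by linarith
qed

definition DD :: "real \<Rightarrow> real \<Rightarrow> real \<Rightarrow> real" where
  "DD lam a x = \<bar>1 - a * exp (- lam) - (1 - a) * exp (- lam * x)\<bar>"

lemma DD_key:
  assumes "lam \<noteq> 0" "0 \<le> x" "x \<le> y" "y \<le> 1" "0 < a1" "a1 < a2"
  shows "DD lam a2 y * DD lam a1 x \<le> DD lam a2 x * DD lam a1 y"
proof (cases "lam > 0")
  case True
  have e: "\<And>z a. 0 \<le> z \<Longrightarrow> z \<le> 1 \<Longrightarrow> 0 < a \<Longrightarrow> DD lam a z = (1 - exp (- lam * z)) + a * (exp (- lam * z) - exp (- lam))"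
  proof -
    fix z a :: real assume z: "0 \<le> z" "z \<le> 1" "0 < a"
    have "exp (- lam * z) \<le> 1" using z True by simp
    moreover have "exp (- lam) \<le> exp (- lam * z)" using z True
      by (simp add: mult_left_le)
    ultimately have "0 \<le> (1 - exp (- lam * z)) + a * (exp (- lam * z) - exp (- lam))"
      using z by simp
    thus "DD lam a z = (1 - exp (- lam * z)) + a * (exp (- lam * z) - exp (- lam))"
      unfolding DD_def by (simp add: algebra_simps)
  qed
  have m: "exp (- lam * y) \<le> exp (- lam * x)" using assms True by simp
  have "exp (- lam) \<le> exp (- lam * y)" using assms True by (simp add: mult_left_le)
  have "exp (- lam * x) \<le> 1" using assms True by simp
  show ?thesis
    using e[of y a2] e[of x a1] e[of x a2] e[of y a1] assms
    apply simp
    apply (rule alg_key)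
    using assms m \<open>exp (- lam) \<le> exp (- lam * y)\<close> \<open>exp (- lam * x) \<le> 1\<close> by auto
next
  case False
  hence L: "lam < 0" using assms by simp
  have e: "\<And>z a. 0 \<le> z \<Longrightarrow> z \<le> 1 \<Longrightarrow> 0 < a \<Longrightarrow> DD lam a z = (exp (- lam * z) - 1) + a * (exp (- lam) - exp (- lam * z))"
  proof -
    fix z a :: real assume z: "0 \<le> z" "z \<le> 1" "0 < a"
    have "1 \<le> exp (- lam * z)" using z L by (simp add: mult_nonpos_nonneg)
    moreover have "exp (- lam * z) \<le> exp (- lam)" using z L
      by (simp add: mult_left_le)
    ultimately have "0 \<le> (exp (- lam * z) - 1) + a * (exp (- lam) - exp (- lam * z))"
      using z by simp
    thus "DD lam a z = (exp (- lam * z) - 1) + a * (exp (- lam) - exp (- lam * z))"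
      unfolding DD_def by (simp add: algebra_simps)
  qed
  have m: "exp (- lam * x) \<le> exp (- lam * y)" using assms L by (simp add: mult_left_mono_neg)
  have "exp (- lam * y) \<le> exp (- lam)" using assms L by (simp add: mult_left_le)
  have "1 \<le> exp (- lam * x)" using assms L by (simp add: mult_nonpos_nonneg)
  show ?thesis
    using e[of y a2] e[of x a1] e[of x a2] e[of y a1] assms
    apply simp
    apply (rule alg_key)
    using assms m \<open>exp (- lam * y) \<le> exp (- lam)\<close> \<open>1 \<le> exp (- lam * x)\<close> by auto
qed

theorem theorem1:
  fixes G g :: "real \<Rightarrow> real" and \<theta> lam \<alpha>\<^sub>1 \<alpha>\<^sub>2 :: real
  assumes g_nonneg: "\<And>t. g t \<ge> 0"
    and G_cdf: "\<And>t. (g has_integral G t) {..t}"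
    and g_total: "(g has_integral 1) UNIV"
    and "\<theta> > 0" and "lam \<noteq> 0"
    and "0 < \<alpha>\<^sub>1" and "\<alpha>\<^sub>1 < \<alpha>\<^sub>2"
  shows "lr_le (gmop_pdf G g \<theta> \<alpha>\<^sub>1 lam) (gmop_pdf G g \<theta> \<alpha>\<^sub>2 lam)"
proof -
  have Gmono: "G s \<le> G t" if "s \<le> t" for s t
    by (rule has_integral_subset_le[OF _ G_cdf G_cdf]) (use that g_nonneg in auto)
  have G0: "0 \<le> G t" for t
    by (rule has_integral_nonneg[OF G_cdf]) (use g_nonneg in auto)
  have G1: "G t \<le> 1" for t
    by (rule has_integral_subset_le[OF _ G_cdf g_total]) (use g_nonneg in auto)
  define p where "p = \<theta> + 1"
  define N where "N a = \<theta> * lam * a powr \<theta> * (1 - exp (- lam))" for a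
  define H where "H x = g x * exp (- lam * G x) * \<bar>exp (- lam * G x) - exp (- lam)\<bar> powr (\<theta> - 1)" for x
  have f: "gmop_pdf G g \<theta> a lam x = N a * H x / DD lam a (G x) powr p" for a x
    unfolding gmop_pdf_def N_def H_def DD_def p_def by (simp add: mult.assoc)
  have rat: "gmop_pdf G g \<theta> \<alpha>\<^sub>1 lam x / gmop_pdf G g \<theta> \<alpha>\<^sub>2 lam x
      = (\<alpha>\<^sub>1 powr \<theta> / \<alpha>\<^sub>2 powr \<theta>) * (DD lam \<alpha>\<^sub>2 (G x) / DD lam \<alpha>\<^sub>1 (G x)) powr p"
    and pos: "DD lam \<alpha>\<^sub>1 (G x) > 0"
    if "gmop_pdf G g \<theta> \<alpha>\<^sub>1 lam x > 0" "gmop_pdf G g \<theta> \<alpha>\<^sub>2 lam x > 0" for x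
  proof -
    have h1: "N \<alpha>\<^sub>1 \<noteq> 0" "H x \<noteq> 0" "DD lam \<alpha>\<^sub>1 (G x) powr p \<noteq> 0"
      using that(1) unfolding f by auto
    have h2: "N \<alpha>\<^sub>2 \<noteq> 0" "DD lam \<alpha>\<^sub>2 (G x) powr p \<noteq> 0"
      using that(2) unfolding f by auto
    have "DD lam \<alpha>\<^sub>1 (G x) \<ge> 0" unfolding DD_def by simp
    with h1 show "DD lam \<alpha>\<^sub>1 (G x) > 0" by auto
    have "N \<alpha>\<^sub>1 / N \<alpha>\<^sub>2 = \<alpha>\<^sub>1 powr \<theta> / \<alpha>\<^sub>2 powr \<theta>"
      using h1 h2 unfolding N_def by auto
    moreover have "gmop_pdf G g \<theta> \<alpha>\<^sub>1 lam x / gmop_pdf G g \<theta> \<alpha>\<^sub>2 lam x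
       = (N \<alpha>\<^sub>1 / N \<alpha>\<^sub>2) * (DD lam \<alpha>\<^sub>2 (G x) powr p / DD lam \<alpha>\<^sub>1 (G x) powr p)"
      unfolding f using h1 h2 by (simp add: field_simps)
    ultimately show "gmop_pdf G g \<theta> \<alpha>\<^sub>1 lam x / gmop_pdf G g \<theta> \<alpha>\<^sub>2 lam x
      = (\<alpha>\<^sub>1 powr \<theta> / \<alpha>\<^sub>2 powr \<theta>) * (DD lam \<alpha>\<^sub>2 (G x) / DD lam \<alpha>\<^sub>1 (G x)) powr p"
      by (simp add: powr_divide)
  qed
  show ?thesis unfolding lr_le_def
  proof (intro allI impI)
    fix s t assume st: "s \<le> t \<and> gmop_pdf G g \<theta> \<alpha>\<^sub>1 lam s > 0 \<and> gmop_pdf G g \<theta> \<alpha>\<^sub>2 lam s > 0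
        \<and> gmop_pdf G g \<theta> \<alpha>\<^sub>1 lam t > 0 \<and> gmop_pdf G g \<theta> \<alpha>\<^sub>2 lam t > 0"
    have ps: "DD lam \<alpha>\<^sub>1 (G s) > 0" and pt: "DD lam \<alpha>\<^sub>1 (G t) > 0" using pos st by auto
    have k: "DD lam \<alpha>\<^sub>2 (G t) * DD lam \<alpha>\<^sub>1 (G s) \<le> DD lam \<alpha>\<^sub>2 (G s) * DD lam \<alpha>\<^sub>1 (G t)"
      by (rule DD_key) (use assms G0 G1 Gmono st in auto)
    have q: "DD lam \<alpha>\<^sub>2 (G t) / DD lam \<alpha>\<^sub>1 (G t) \<le> DD lam \<alpha>\<^sub>2 (G s) / DD lam \<alpha>\<^sub>1 (G s)"
      using k ps pt by (simp add: divide_simps)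
    have "DD lam \<alpha>\<^sub>2 (G t) \<ge> 0" unfolding DD_def by simp
    hence "(DD lam \<alpha>\<^sub>2 (G t) / DD lam \<alpha>\<^sub>1 (G t)) powr p \<le> (DD lam \<alpha>\<^sub>2 (G s) / DD lam \<alpha>\<^sub>1 (G s)) powr p"
      using q pt p_def assms by (intro powr_mono2) auto
    moreover have "\<alpha>\<^sub>1 powr \<theta> / \<alpha>\<^sub>2 powr \<theta> \<ge> 0" by simp
    ultimately show "gmop_pdf G g \<theta> \<alpha>\<^sub>1 lam t / gmop_pdf G g \<theta> \<alpha>\<^sub>2 lam t
        \<le> gmop_pdf G g \<theta> \<alpha>\<^sub>1 lam s / gmop_pdf G g \<theta> \<alpha>\<^sub>2 lam s"
      unfolding rat[of t, OF conjunct1[OF conjunct2[OF conjunct2[OF conjunct2[OF st]]]] conjunct2[OF conjunct2[OF conjunct2[OF conjunct2[OF st]]]]]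
        rat[of s, OF conjunct1[OF conjunct2[OF st]] conjunct1[OF conjunct2[OF conjunct2[OF st]]]]
      by (rule mult_left_mono)
  qed
qed

end
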